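(* Let $\mathcal{X},\mathcal{Y},\mathcal{H}$ be Hilbert spaces with either $\mathcal{H}=\mathbb{C}$ or $\mathcal{H}=\mathcal{Y}$. If $g\in\mathcal{SA}_\Psi(\mathcal{X},\mathcal{Y})$ and $f\in\mathcal{SA}_\Psi(\mathcal{Y},\mathcal{H})$, then the pointwise product $fg:\Omega\to B(\mathcal{X},\mathcal{H})$, $(fg)(z)=f(z)g(z)$, belongs to $\mathcal{SA}_\Psi(\mathcal{X},\mathcal{H})$.
   Context: Let $\Omega\subset\mathbb{C}^n$ be a bounded domain. A family $\Psi$ of functions $\Omega\to\mathbb{C}$ is a collection of test functions if $\sup_{\psi\in\Psi}|\psi(x)|<1$ for each $x\in\Omega$ and, for each finite $F\subset\Omega$, the restrictions $\{\psi|_F\}$ together with $1$ generate the algebra of all functions $F\to\mathbb{C}$. For a Hilbert space $\mathcal{E}$, a function $K:\Omega\times\Omega\to B(\mathcal{E})$ is a positive kernel if $\sum_{i,j=1}^n\langle K(x_i,x_j)e_j,e_i\rangle\ge 0$ for all finite choices of $x_i\in\Omega$, $e_i\in\mathcal{E}$; $\mathcal{H}(K)$ is its reproducing kernel Hilbert space. $K$ is $\Psi$-admissible if for each $\psi\in\Psi$ multiplication by $\psi$ is a contraction on $\mathcal{H}(K)$; $\mathcal{K}_\Psi(\mathcal{E})$ is the set of such kernels. For Hilbert spaces $\mathcal{U},\mathcal{Y}$, $H^\infty_\Psi(\mathcal{U},\mathcal{Y})$ is the set of $S:\Omega\to B(\mathcal{U},\mathcal{Y})$ for which there is $C\ge0$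 with $(x,y)\mapsto(C^2I_{\mathcal{Y}}-S(x)S(y)^* )\otimes K(x,y)$ a positive $B(\mathcal{Y}\otimes\mathcal{Y})$-valued kernel for every $K\in\mathcal{K}_\Psi(\mathcal{Y})$; $\|S\|_\Psi$ is the infimum of such $C$, and the $\Psi$-Schur–Agler class is $\mathcal{SA}_\Psi(\mathcal{U},\mathcal{Y})=\{S\in H^\infty_\Psi(\mathcal{U},\mathcal{Y}):\|S\|_\Psi\le 1\}$. *)

theory Defs
  imports "HOL-Analysis.Analysis"
begin

class cvec = ab_group_add +
  fixes hscale :: "complex \<Rightarrow> 'a \<Rightarrow> 'a" (infixr \<open>*\<^sub>H\<close> 75)
  assumes hscale_add_right: "c *\<^sub>H (x + y) = c *\<^sub>H x + c *\<^sub>H y"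
    and hscale_add_left: "(c + d) *\<^sub>H x = c *\<^sub>H x + d *\<^sub>H x"
    and hscale_hscale: "c *\<^sub>H (d *\<^sub>H x) = (c * d) *\<^sub>H x"
    and hscale_one: "1 *\<^sub>H x = x"

class cinner_space = cvec +
  fixes hinner :: "'a \<Rightarrow> 'a \<Rightarrow> complex"
  assumes hinner_add_left: "hinner (x + y) z = hinner x z + hinner y z"
    and hinner_scale_left: "hinner (c *\<^sub>H x) y = c * hinner x y"
    and hinner_commute: "hinner x y = cnj (hinner y x)"
    and hinner_self_real: "Im (hinner x x) = 0"
    and hinner_self_nonneg: "0 \<le> Re (hinner x x)"
    and hinner_self_eq_0: "hinner x x = 0 \<longleftrightarrow> x = 0"

definition hnorm :: "'a::cinner_space \<Rightarrow> real" where
  "hnorm x = sqrt (Re (hinner x x))"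

class chilbert = cinner_space +
  assumes hcomplete:
    "(\<forall>e>0. \<exists>N. \<forall>m\<ge>N. \<forall>n\<ge>N. sqrt (Re (hinner (X m - X n) (X m - X n))) < e) \<Longrightarrow>
      \<exists>L. (\<lambda>n. sqrt (Re (hinner (X n - L) (X n - L)))) \<longlonglongrightarrow> 0"

instantiation complex :: chilbert
begin
definition hscale_complex :: "complex \<Rightarrow> complex \<Rightarrow> complex" where
  "hscale_complex c x = c * x"
definition hinner_complex :: "complex \<Rightarrow> complex \<Rightarrow> complex" where
  "hinner_complex x y = x * cnj y"


instance
proof
  have hc: "\<And>x::complex. sqrt (Re (hinner x x)) = cmod x"
    by (simp add: hinner_complex_def complex_mult_cnj cmod_def power2_eq_square)
  fix X :: "nat \<Rightarrow> complex"
  assume "\<forall>e>0. \<exists>N. \<forall>m\<ge>N. \<forall>n\<ge>N. sqrt (Re (hinner (X m - X n) (X m - X n))) < e"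
  then have "Cauchy X"
    by (simp add: hc Cauchy_def dist_norm)
  then obtain L where "X \<longlonglongrightarrow> L" using convergent_eq_Cauchy convergent_def by blast
  then have "(\<lambda>n. cmod (X n - L)) \<longlonglongrightarrow> 0"
    using LIM_zero tendsto_norm_zero by blast
  then show "\<exists>L. (\<lambda>n. sqrt (Re (hinner (X n - L) (X n - L)))) \<longlonglongrightarrow> 0"
    by (auto simp: hc)
qed (auto simp: hscale_complex_def hinner_complex_def algebra_simps complex_eq_iff)
end

definition bounded_op :: "('a::chilbert \<Rightarrow> 'b::chilbert) \<Rightarrow> bool" where
  "bounded_op T \<longleftrightarrow> (\<forall>x y. T (x + y) = T x + T y) \<and> (\<forall>c x. T (c *\<^sub>H x) = c *\<^sub>H T x)
     \<and> (\<exists>M. \<forall>x. hnorm (T x) \<le> M * hnorm x)"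

definition adj :: "('a::chilbert \<Rightarrow> 'b::chilbert) \<Rightarrow> 'b \<Rightarrow> 'a" where
  "adj T = (SOME T'. \<forall>x y. hinner (T x) y = hinner x (T' y))"

inductive_set gen_alg :: "('z \<Rightarrow> complex) set \<Rightarrow> ('z \<Rightarrow> complex) set" for \<Psi> where
  one: "(\<lambda>_. 1) \<in> gen_alg \<Psi>"
| gen: "\<psi> \<in> \<Psi> \<Longrightarrow> \<psi> \<in> gen_alg \<Psi>"
| add: "f \<in> gen_alg \<Psi> \<Longrightarrow> g \<in> gen_alg \<Psi> \<Longrightarrow> (\<lambda>x. f x + g x) \<in> gen_alg \<Psi>"
| smult: "f \<in> gen_alg \<Psi> \<Longrightarrow> (\<lambda>x. c * f x) \<in> gen_alg \<Psi>"
| mult: "f \<in> gen_alg \<Psi> \<Longrightarrow> g \<in> gen_alg \<Psi> \<Longrightarrow> (\<lambda>x. f x * g x) \<in> gen_alg \<Psi>"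

definition test_functions :: "'z set \<Rightarrow> ('z \<Rightarrow> complex) set \<Rightarrow> bool" where
  "test_functions \<Omega> \<Psi> \<longleftrightarrow>
     (\<forall>x\<in>\<Omega>. bdd_above ((\<lambda>\<psi>. cmod (\<psi> x)) ` \<Psi>) \<and> (SUP \<psi>\<in>\<Psi>. cmod (\<psi> x)) < 1) \<and>
     (\<forall>F. finite F \<and> F \<subseteq> \<Omega> \<longrightarrow>
        (\<forall>h::'z \<Rightarrow> complex. \<exists>p\<in>gen_alg \<Psi>. \<forall>x\<in>F. p x = h x))"

definition nonneg_c :: "complex \<Rightarrow> bool" where
  "nonneg_c s \<longleftrightarrow> Im s = 0 \<and> 0 \<le> Re s"

definition pos_kernel :: "'z set \<Rightarrow> ('z \<Rightarrow> 'z \<Rightarrow> 'e::chilbert \<Rightarrow> 'e) \<Rightarrow> bool" where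
  "pos_kernel \<Omega> K \<longleftrightarrow> (\<forall>(n::nat) (x::nat \<Rightarrow> 'z) (e::nat \<Rightarrow> 'e). (\<forall>i<n. x i \<in> \<Omega>) \<longrightarrow>
     nonneg_c (\<Sum>i<n. \<Sum>j<n. hinner (K (x i) (x j) (e j)) (e i)))"

text \<open>\<open>rkhs_ball \<Omega> K h C\<close>: the function h belongs to H(K) and has norm at most C.
  (For a positive kernel, h \<in> H(K) with norm \<le> C iff the functional
  \<open>\<Sum> K(.,x_i) e_i \<mapsto> \<Sum> \<langle>h(x_i), e_i\<rangle>\<close> is bounded by C on the dense span of kernel functions.)\<close>
definition rkhs_ball :: "'z set \<Rightarrow> ('z \<Rightarrow> 'z \<Rightarrow> 'e::chilbert \<Rightarrow> 'e) \<Rightarrow> ('z \<Rightarrow> 'e) \<Rightarrow> real \<Rightarrow> bool" where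
  "rkhs_ball \<Omega> K h C \<longleftrightarrow> 0 \<le> C \<and>
     (\<forall>(n::nat) (x::nat \<Rightarrow> 'z) (e::nat \<Rightarrow> 'e). (\<forall>i<n. x i \<in> \<Omega>) \<longrightarrow>
        (cmod (\<Sum>i<n. hinner (h (x i)) (e i)))\<^sup>2 \<le>
          C\<^sup>2 * Re (\<Sum>i<n. \<Sum>j<n. hinner (K (x i) (x j) (e j)) (e i)))"

definition mult_contraction :: "'z set \<Rightarrow> ('z \<Rightarrow> complex) \<Rightarrow> ('z \<Rightarrow> 'z \<Rightarrow> 'e::chilbert \<Rightarrow> 'e) \<Rightarrow> bool" where
  "mult_contraction \<Omega> \<psi> K \<longleftrightarrow>
     (\<forall>h C. rkhs_ball \<Omega> K h C \<longrightarrow> rkhs_ball \<Omega> K (\<lambda>z. \<psi> z *\<^sub>H h z) C)"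

definition admissible_kernels :: "'z set \<Rightarrow> ('z \<Rightarrow> complex) set \<Rightarrow> ('z \<Rightarrow> 'z \<Rightarrow> 'e::chilbert \<Rightarrow> 'e) set" where
  "admissible_kernels \<Omega> \<Psi> = {K. (\<forall>x\<in>\<Omega>. \<forall>y\<in>\<Omega>. bounded_op (K x y)) \<and> pos_kernel \<Omega> K \<and>
                                 (\<forall>\<psi>\<in>\<Psi>. mult_contraction \<Omega> \<psi> K)}"

text \<open>Positivity of the B(Y \<otimes> Y)-valued kernel A(x,y) \<otimes> B(x,y), tested on vectors of the
  (dense) algebraic tensor product: h_j = \<Sum>_{k<m} a j k \<otimes> b j k.\<close>
definition pos_tensor_kernel :: "'z set \<Rightarrow> ('z \<Rightarrow> 'z \<Rightarrow> 'y::chilbert \<Rightarrow> 'y) \<Rightarrow> ('z \<Rightarrow> 'z \<Rightarrow> 'y \<Rightarrow> 'y) \<Rightarrow> bool" where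
  "pos_tensor_kernel \<Omega> A B \<longleftrightarrow>
    (\<forall>(n::nat) (m::nat) (x::nat \<Rightarrow> 'z) (a::nat \<Rightarrow> nat \<Rightarrow> 'y) (b::nat \<Rightarrow> nat \<Rightarrow> 'y).
       (\<forall>i<n. x i \<in> \<Omega>) \<longrightarrow>
       nonneg_c (\<Sum>i<n. \<Sum>j<n. \<Sum>k<m. \<Sum>l<m.
          hinner (A (x i) (x j) (a j k)) (a i l) * hinner (B (x i) (x j) (b j k)) (b i l)))"

definition SA_bound :: "'z set \<Rightarrow> ('z \<Rightarrow> complex) set \<Rightarrow> ('z \<Rightarrow> 'u::chilbert \<Rightarrow> 'y::chilbert) \<Rightarrow> real \<Rightarrow> bool" where
  "SA_bound \<Omega> \<Psi> S C \<longleftrightarrow> 0 \<le> C \<and>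
     (\<forall>K \<in> admissible_kernels \<Omega> \<Psi>.
        pos_tensor_kernel \<Omega> (\<lambda>x y v. (complex_of_real (C\<^sup>2)) *\<^sub>H v - S x (adj (S y) v)) K)"

definition Hinf_Psi :: "'z set \<Rightarrow> ('z \<Rightarrow> complex) set \<Rightarrow> ('z \<Rightarrow> 'u::chilbert \<Rightarrow> 'y::chilbert) set" where
  "Hinf_Psi \<Omega> \<Psi> = {S. (\<forall>x\<in>\<Omega>. bounded_op (S x)) \<and> (\<exists>C. SA_bound \<Omega> \<Psi> S C)}"

definition Psi_norm :: "'z set \<Rightarrow> ('z \<Rightarrow> complex) set \<Rightarrow> ('z \<Rightarrow> 'u::chilbert \<Rightarrow> 'y::chilbert) \<Rightarrow> real" where
  "Psi_norm \<Omega> \<Psi> S = Inf {C. SA_bound \<Omega> \<Psi> S C}"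

definition SA_Psi :: "'z set \<Rightarrow> ('z \<Rightarrow> complex) set \<Rightarrow> ('z \<Rightarrow> 'u::chilbert \<Rightarrow> 'y::chilbert) set" where
  "SA_Psi \<Omega> \<Psi> = {S \<in> Hinf_Psi \<Omega> \<Psi>. Psi_norm \<Omega> \<Psi> S \<le> 1}"

end

theory Submission
  imports Defs
begin


lemma hscale_zero_left[simp]: "(0::complex) *\<^sub>H (x::'a::cvec) = 0"
proof -
  have "0 *\<^sub>H x + 0 *\<^sub>H x = (0::complex) *\<^sub>H x" using hscale_add_left[of 0 0 x] by simp
  then show ?thesis by (metis add_cancel_right_right)
qed

lemma hscale_zero_right[simp]: "c *\<^sub>H (0::'a::cvec) = 0"
proof -
  have "c *\<^sub>H 0 + c *\<^sub>H 0 = c *\<^sub>H (0::'a)" using hscale_add_right[of c 0 0] by simp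
  then show ?thesis by (metis add_cancel_right_right)
qed

lemma hscale_minus_right: "c *\<^sub>H (- x) = - (c *\<^sub>H (x::'a::cvec))"
proof -
  have "c *\<^sub>H x + c *\<^sub>H (-x) = 0" using hscale_add_right[of c x "-x"] by simp
  from minus_unique[OF this] show ?thesis by simp
qed

lemma hscale_minus_left: "(- c) *\<^sub>H x = - (c *\<^sub>H (x::'a::cvec))"
proof -
  have "c *\<^sub>H x + (-c) *\<^sub>H x = 0" using hscale_add_left[of c "-c" x] by simp
  from minus_unique[OF this] show ?thesis by simp
qed

lemma hscale_diff_right: "c *\<^sub>H (x - y) = c *\<^sub>H x - c *\<^sub>H (y::'a::cvec)"
  by (simp only: diff_conv_add_uminus hscale_add_right hscale_minus_right)

lemma hscale_diff_left: "(c - d) *\<^sub>H x = c *\<^sub>H x - d *\<^sub>H (x::'a::cvec)"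
  by (simp only: diff_conv_add_uminus hscale_add_left hscale_minus_left)

lemma hinner_zero_left[simp]: "hinner 0 (y::'a::cinner_space) = 0"
proof -
  have "hinner 0 y + hinner 0 y = hinner (0::'a) y" using hinner_add_left[of 0 0 y] by simp
  then show ?thesis by simp
qed

lemma hinner_zero_right[simp]: "hinner (x::'a::cinner_space) 0 = 0"
  by (metis complex_cnj_zero hinner_commute hinner_zero_left)

lemma hinner_add_right: "hinner (x::'a::cinner_space) (y + z) = hinner x y + hinner x z"
  by (metis complex_cnj_add hinner_add_left hinner_commute)

lemma hinner_scale_right: "hinner (x::'a::cinner_space) (c *\<^sub>H y) = cnj c * hinner x y"
  by (metis complex_cnj_mult hinner_commute hinner_scale_left)

lemma hinner_minus_left: "hinner (- x) (y::'a::cinner_space) = - hinner x y"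
  by (metis hinner_scale_left hscale_minus_left hscale_one mult_minus_left mult_1)

lemma hinner_minus_right: "hinner x (- y::'a::cinner_space) = - hinner x y"
  by (metis complex_cnj_minus hinner_commute hinner_minus_left)

lemma hinner_diff_left: "hinner (x - y) (z::'a::cinner_space) = hinner x z - hinner y z"
  by (simp only: diff_conv_add_uminus hinner_add_left hinner_minus_left)

lemma hinner_diff_right: "hinner x (y - z::'a::cinner_space) = hinner x y - hinner x z"
  by (simp only: diff_conv_add_uminus hinner_add_right hinner_minus_right)

lemma hinner_self_of_real: "hinner x (x::'a::cinner_space) = of_real (Re (hinner x x))"
  by (simp add: complex_eq_iff hinner_self_real)

lemma proj_expand:
  fixes x y :: "'a::cinner_space"
  shows "hinner (x - t *\<^sub>H y) (x - t *\<^sub>H y) =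
    hinner x x - cnj t * hinner x y - t * cnj (hinner x y) + t * cnj t * hinner y y"
  by (simp add: hinner_diff_left hinner_diff_right hinner_scale_left hinner_scale_right
      algebra_simps) (metis hinner_commute)

lemma proj_expand2:
  fixes x y :: "'a::cinner_space"
  assumes "y \<noteq> 0" and t: "t = hinner x y / hinner y y"
  shows "Re (hinner (x - t *\<^sub>H y) (x - t *\<^sub>H y)) = Re (hinner x x) - (cmod (hinner x y))\<^sup>2 / Re (hinner y y)"
proof -
  define r where "r = Re (hinner y y)"
  have r: "hinner y y = of_real r" using hinner_self_of_real r_def by blast
  have rp: "r \<noteq> 0" using assms(1) hinner_self_eq_0 r by fastforce
  define p where "p = hinner x y"
  have pp: "p * cnj p = of_real ((cmod p)\<^sup>2)" using complex_norm_square[of p] by simp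
  have "hinner (x - t *\<^sub>H y) (x - t *\<^sub>H y) = hinner x x - p * cnj p / of_real r"
    unfolding proj_expand t r p_def[symmetric] using rp
    by (simp add: field_simps power2_eq_square)
  also have "\<dots> = hinner x x - of_real ((cmod p)\<^sup>2 / r)" using pp by simp
  finally show ?thesis by (simp add: p_def r_def)
qed

lemma cauchy_schwarz:
  fixes x y :: "'a::cinner_space"
  shows "(cmod (hinner x y))\<^sup>2 \<le> Re (hinner x x) * Re (hinner y y)"
proof (cases "y = 0")
  case True then show ?thesis by simp
next
  case False
  define r where "r = Re (hinner y y)"
  have rp: "r > 0" using False hinner_self_eq_0 hinner_self_nonneg hinner_self_of_real r_def
    by (metis less_eq_real_def of_real_0)
  have "0 \<le> Re (hinner x x) - (cmod (hinner x y))\<^sup>2 / r"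
    using proj_expand2[OF False refl, of x] hinner_self_nonneg r_def by metis
  then show ?thesis using rp by (simp add: field_simps r_def)
qed

lemma hnorm_nonneg[simp]: "0 \<le> hnorm x" by (simp add: hnorm_def hinner_self_nonneg)

lemma hnorm_sq: "(hnorm x)\<^sup>2 = Re (hinner x x)"
  by (simp add: hnorm_def hinner_self_nonneg)

lemma hinner_le: "cmod (hinner x y) \<le> hnorm x * hnorm y"
proof -
  have "(cmod (hinner x y))\<^sup>2 \<le> (hnorm x * hnorm y)\<^sup>2"
    using cauchy_schwarz[of x y] by (simp add: power_mult_distrib hnorm_sq)
  then show ?thesis by (meson hnorm_nonneg mult_nonneg_nonneg power2_le_imp_le)
qed

lemma hnorm_eq_0[simp]: "hnorm x = 0 \<longleftrightarrow> x = 0"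
proof -
  have "hnorm x = 0 \<longleftrightarrow> Re (hinner x x) = 0" by (simp add: hnorm_def)
  also have "\<dots> \<longleftrightarrow> hinner x x = 0" by (metis hinner_self_of_real of_real_0 zero_complex.simps(1))
  finally show ?thesis by (simp add: hinner_self_eq_0)
qed

lemma hnorm_scale: "hnorm (c *\<^sub>H x) = cmod c * hnorm x"
proof -
  have "Re (hinner (c *\<^sub>H x) (c *\<^sub>H x)) = (cmod c)\<^sup>2 * Re (hinner x x)"
  proof -
    have e1: "c * cnj c = of_real ((cmod c)\<^sup>2)" using complex_norm_square[of c] by simp
    have "hinner (c *\<^sub>H x) (c *\<^sub>H x) = (c * cnj c) * hinner x x"
      by (simp add: hinner_scale_left hinner_scale_right)
    also have "\<dots> = of_real ((cmod c)\<^sup>2) * of_real (Re (hinner x x))"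
      using e1 hinner_self_of_real by metis
    finally show ?thesis by simp
  qed
  then show ?thesis by (simp add: hnorm_def real_sqrt_mult)
qed

lemma hnorm_triangle: "hnorm (x + y) \<le> hnorm x + hnorm y"
proof -
  have "Re (hinner (x+y) (x+y)) = Re (hinner x x) + 2 * Re (hinner x y) + Re (hinner y y)"
    apply (simp add: hinner_add_left hinner_add_right)
    by (metis cnj.simps(1) hinner_commute)
  also have "\<dots> \<le> (hnorm x)\<^sup>2 + 2 * (hnorm x * hnorm y) + (hnorm y)\<^sup>2"
    using hinner_le[of x y] abs_Re_le_cmod[of "hinner x y"] by (simp add: hnorm_sq)
  also have "\<dots> = (hnorm x + hnorm y)\<^sup>2" by (simp add: power2_sum)
  finally have "(hnorm (x+y))\<^sup>2 \<le> (hnorm x + hnorm y)\<^sup>2" by (simp only: hnorm_sq)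
  from power2_le_imp_le[OF this] show ?thesis by simp
qed

lemma hnorm_minus_commute: "hnorm (x - y) = hnorm (y - x)"
proof -
  have "x - y = (-1) *\<^sub>H (y - x)" by (simp add: hscale_minus_left hscale_one)
  then show ?thesis by (simp add: hnorm_scale)
qed



lemma q_scale: "Re (hinner (c *\<^sub>H x) (c *\<^sub>H (x::'a::cinner_space))) = (cmod c)\<^sup>2 * Re (hinner x x)"
  using hnorm_scale[of c x] by (metis hnorm_sq power_mult_distrib)

lemma parallelogram:
  "Re (hinner (a - b) (a - b)) = 2 * Re (hinner a a) + 2 * Re (hinner b b) - Re (hinner (a + b) (a + (b::'a::cinner_space)))"
  by (simp add: hinner_add_left hinner_add_right hinner_diff_left hinner_diff_right)

lemma riesz:
  fixes \<phi> :: "'a::chilbert \<Rightarrow> complex"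
  assumes add: "\<And>x y. \<phi> (x + y) = \<phi> x + \<phi> y" and scl: "\<And>c x. \<phi> (c *\<^sub>H x) = c * \<phi> x"
    and bnd: "\<And>x. cmod (\<phi> x) \<le> M * hnorm x"
  shows "\<exists>r. \<forall>x. \<phi> x = hinner x r"
proof (cases "\<forall>x. \<phi> x = 0")
  case True then show ?thesis by (intro exI[of _ 0]) simp
next
  case False
  then obtain x1 where x1: "\<phi> x1 \<noteq> 0" by blast
  have diff: "\<phi> (a - b) = \<phi> a - \<phi> b" for a b
    using add[of b "a - b"] by simp
  have zero: "\<phi> 0 = 0" using scl[of 0 0] by simp
  define q :: "'a \<Rightarrow> real" where "q x = Re (hinner x x)" for x
  have qge: "q x \<ge> 0" for x by (simp add: q_def hinner_self_nonneg)
  define S where "S = q ` {y. \<phi> y = 1}"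
  define d where "d = Inf S"
  have y1: "\<phi> ((1 / \<phi> x1) *\<^sub>H x1) = 1" using x1 by (simp add: scl)
  have Sne: "S \<noteq> {}" using y1 S_def by blast
  have Sbdd: "bdd_below S" unfolding S_def using qge by (meson bdd_belowI2)
  have dle: "\<phi> y = 1 \<Longrightarrow> d \<le> q y" for y
    unfolding d_def S_def by (rule cInf_lower) (use Sbdd S_def in auto)
  have dge: "0 \<le> d" unfolding d_def using Sne qge S_def by (auto intro!: cInf_greatest)
  have "\<exists>y. \<phi> y = 1 \<and> q y < d + inverse (real (Suc n))" for n
  proof -
    have "Inf S < d + inverse (real (Suc n))" unfolding d_def by simp
    then obtain s where "s \<in> S" "s < d + inverse (real (Suc n))"
      using cInf_less_iff[OF Sne Sbdd] by blast
    then show ?thesis unfolding S_def by blast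
  qed
  then obtain Y where Y1: "\<And>n. \<phi> (Y n) = 1" and Yq: "\<And>n. q (Y n) < d + inverse (real (Suc n))"
    by metis
  have mid: "4 * d \<le> q (a + b)" if "\<phi> a = 1" "\<phi> b = 1" for a b
  proof -
    have "\<phi> ((1/2) *\<^sub>H (a + b)) = 1" using that by (simp add: scl add)
    then have "d \<le> q ((1/2) *\<^sub>H (a + b))" by (rule dle)
    also have "\<dots> = q (a + b) / 4" unfolding q_def q_scale by (simp add: power2_eq_square)
    finally show ?thesis by simp
  qed
  have cy: "q (Y m - Y n) \<le> 2 * inverse (real (Suc m)) + 2 * inverse (real (Suc n))" for m n
    using parallelogram[of "Y m" "Y n"] Yq[of m] Yq[of n] mid[OF Y1 Y1, of m n] unfolding q_def
    by linarith
  have "\<forall>e>0. \<exists>N. \<forall>m\<ge>N. \<forall>n\<ge>N. sqrt (Re (hinner (Y m - Y n) (Y m - Y n))) < e"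
  proof (intro allI impI)
    fix e :: real assume e: "e > 0"
    obtain N where N: "inverse (real (Suc N)) < e\<^sup>2 / 4"
      using reals_Archimedean e by (metis divide_pos_pos zero_less_numeral zero_less_power)
    show "\<exists>N. \<forall>m\<ge>N. \<forall>n\<ge>N. sqrt (Re (hinner (Y m - Y n) (Y m - Y n))) < e"
    proof (intro exI allI impI)
      fix m n assume mn: "N \<le> m" "N \<le> n"
      have "inverse (real (Suc m)) \<le> inverse (real (Suc N))" using mn by (simp add: le_imp_inverse_le)
      moreover have "inverse (real (Suc n)) \<le> inverse (real (Suc N))" using mn by (simp add: le_imp_inverse_le)
      ultimately have "q (Y m - Y n) < e\<^sup>2" using cy[of m n] N by linarith
      then have "sqrt (q (Y m - Y n)) < sqrt (e\<^sup>2)" by (rule real_sqrt_less_mono)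
      then show "sqrt (Re (hinner (Y m - Y n) (Y m - Y n))) < e" using e by (simp add: q_def)
    qed
  qed
  then obtain L where L: "(\<lambda>n. sqrt (Re (hinner (Y n - L) (Y n - L)))) \<longlonglongrightarrow> 0"
    using hcomplete by blast
  then have Ln: "(\<lambda>n. hnorm (Y n - L)) \<longlonglongrightarrow> 0" by (simp add: hnorm_def)
  have "cmod (1 - \<phi> L) \<le> 0"
  proof (rule LIMSEQ_le_const)
    show "(\<lambda>n. M * hnorm (Y n - L)) \<longlonglongrightarrow> 0" using tendsto_mult_right_zero[OF Ln] by simp
    show "\<exists>N. \<forall>n\<ge>N. cmod (1 - \<phi> L) \<le> M * hnorm (Y n - L)"
      using bnd diff Y1 by metis
  qed
  then have L1: "\<phi> L = 1" by simp
  have "hnorm L \<le> sqrt d"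
  proof (rule LIMSEQ_le_const)
    have "(\<lambda>n. sqrt (d + inverse (real (Suc n)))) \<longlonglongrightarrow> sqrt (d + 0)"
      by (intro tendsto_intros LIMSEQ_inverse_real_of_nat)
    from tendsto_add[OF this Ln]
    show "(\<lambda>n. sqrt (d + inverse (real (Suc n))) + hnorm (Y n - L)) \<longlonglongrightarrow> sqrt d" by simp
    show "\<exists>N. \<forall>n\<ge>N. hnorm L \<le> sqrt (d + inverse (real (Suc n))) + hnorm (Y n - L)"
    proof (intro exI allI impI)
      fix n :: nat
      have "hnorm L \<le> hnorm (Y n) + hnorm (L - Y n)" using hnorm_triangle[of "Y n" "L - Y n"] by simp
      moreover have "hnorm (Y n) \<le> sqrt (d + inverse (real (Suc n)))"
        using Yq[of n] by (simp add: hnorm_def q_def)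
      ultimately show "hnorm L \<le> sqrt (d + inverse (real (Suc n))) + hnorm (Y n - L)"
        using hnorm_minus_commute[of L "Y n"] by linarith
    qed
  qed
  then have "q L \<le> d" using hnorm_sq[of L] dge unfolding q_def
    by (metis hnorm_nonneg power_mono real_sqrt_pow2)
  with dle[OF L1] have qL: "q L = d" by simp
  have Lnz: "L \<noteq> 0" using L1 zero by auto
  have orth: "hinner L n = 0" if n0: "\<phi> n = 0" for n
  proof (rule ccontr)
    assume ne: "hinner L n \<noteq> 0"
    then have nnz: "n \<noteq> 0" by auto
    define t where "t = hinner L n / hinner n n"
    have "\<phi> (L - t *\<^sub>H n) = 1" using L1 n0 by (simp add: diff scl)
    then have "d \<le> q (L - t *\<^sub>H n)" by (rule dle)
    also have "\<dots> = q L - (cmod (hinner L n))\<^sup>2 / q n"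
      unfolding q_def by (rule proj_expand2[OF nnz t_def])
    finally have "(cmod (hinner L n))\<^sup>2 / q n \<le> 0" using qL by simp
    moreover have "q n > 0" using nnz qge[of n] hinner_self_eq_0 hinner_self_of_real q_def
      by (metis less_eq_real_def of_real_0)
    ultimately show False using ne by (simp add: divide_le_0_iff)
  qed
  have qLp: "q L > 0" using Lnz qge[of L] hinner_self_eq_0 hinner_self_of_real q_def
    by (metis less_eq_real_def of_real_0)
  show ?thesis
  proof (intro exI allI)
    fix x
    have "\<phi> (x - \<phi> x *\<^sub>H L) = 0" using L1 by (simp add: diff scl)
    then have "hinner L (x - \<phi> x *\<^sub>H L) = 0" by (rule orth)
    then have "hinner (x - \<phi> x *\<^sub>H L) L = 0" by (metis complex_cnj_zero hinner_commute)
    then have hx: "hinner x L = \<phi> x * of_real (q L)"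
      by (simp add: hinner_diff_left hinner_scale_left q_def flip: hinner_self_of_real)
    show "\<phi> x = hinner x ((1 / of_real (q L)) *\<^sub>H L)"
      using qLp by (simp add: hinner_scale_right hx)
  qed
qed



lemma bounded_opD:
  assumes "bounded_op T"
  shows "T (x + y) = T x + T y" "T (c *\<^sub>H x) = c *\<^sub>H T x" "\<exists>M. \<forall>x. hnorm (T x) \<le> M * hnorm x"
  using assms unfolding bounded_op_def by blast+

lemma bounded_op_diff: "bounded_op T \<Longrightarrow> T (x - y) = T x - T y"
  using bounded_opD(1)[of T y "x - y"] by simp

lemma adj_exists:
  fixes T :: "'a::chilbert \<Rightarrow> 'b::chilbert"
  assumes "bounded_op T"
  shows "\<exists>T'. \<forall>x y. hinner (T x) y = hinner x (T' y)"
proof -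
  obtain M where M: "\<And>x. hnorm (T x) \<le> M * hnorm x" using bounded_opD(3)[OF assms] by blast
  have "\<forall>y. \<exists>r. \<forall>x. hinner (T x) y = hinner x r"
  proof
    fix y
    show "\<exists>r. \<forall>x. hinner (T x) y = hinner x r"
    proof (rule riesz[where M = "M * hnorm y"])
      show "hinner (T (x1 + x2)) y = hinner (T x1) y + hinner (T x2) y" for x1 x2
        by (simp add: bounded_opD(1)[OF assms] hinner_add_left)
      show "hinner (T (c *\<^sub>H x)) y = c * hinner (T x) y" for c x
        by (simp add: bounded_opD(2)[OF assms] hinner_scale_left)
      show "cmod (hinner (T x) y) \<le> M * hnorm y * hnorm x" for x
      proof -
        have "cmod (hinner (T x) y) \<le> hnorm (T x) * hnorm y" by (rule hinner_le)
        also have "\<dots> \<le> M * hnorm x * hnorm y" using M[of x] by (simp add: mult_right_mono)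
        finally show ?thesis by (simp add: ac_simps)
      qed
    qed
  qed
  then have "\<exists>T'. \<forall>y. \<forall>x. hinner (T x) y = hinner x (T' y)" by (rule choice)
  then show ?thesis by blast
qed

lemma hinner_ext: "(\<And>x. hinner x u = hinner x v) \<Longrightarrow> u = (v::'a::cinner_space)"
proof -
  assume h: "\<And>x. hinner x u = hinner x v"
  have e: "hinner (u - v) u = hinner (u - v) v" by (rule h)
  have "hinner (u - v) (u - v) = 0" unfolding hinner_diff_right e by simp
  then have "u - v = 0" using hinner_self_eq_0 by blast
  then show ?thesis by simp
qed

lemma adj_prop:
  fixes T :: "'a::chilbert \<Rightarrow> 'b::chilbert"
  assumes "bounded_op T"
  shows "hinner (T x) y = hinner x (adj T y)"
proof -
  have "\<forall>x y. hinner (T x) y = hinner x (adj T y)"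
    unfolding adj_def using someI_ex[OF adj_exists[OF assms]] .
  then show ?thesis by blast
qed

lemma adj_unique:
  fixes T :: "'a::chilbert \<Rightarrow> 'b::chilbert"
  assumes h: "\<And>x y. hinner (T x) y = hinner x (T' y)"
  shows "adj T = T'"
proof -
  have ex: "\<exists>T'. \<forall>x y. hinner (T x) y = hinner x (T' y)" using h by blast
  have s: "\<forall>x y. hinner (T x) y = hinner x (adj T y)"
    unfolding adj_def using someI_ex[OF ex] .
  show ?thesis
  proof
    fix y show "adj T y = T' y"
    proof (rule hinner_ext)
      fix x
      have "hinner x (adj T y) = hinner (T x) y" using s by simp
      also have "\<dots> = hinner x (T' y)" by (rule h)
      finally show "hinner x (adj T y) = hinner x (T' y)" .
    qed
  qed
qed

lemma adj_comp:
  fixes F :: "'b::chilbert \<Rightarrow> 'c::chilbert" and T :: "'a::chilbert \<Rightarrow> 'b"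
  assumes "bounded_op F" "bounded_op T"
  shows "adj (F \<circ> T) = adj T \<circ> adj F"
  by (rule adj_unique) (simp add: adj_prop[OF assms(1)] adj_prop[OF assms(2)])

lemma adj_scale:
  fixes T :: "'a::chilbert \<Rightarrow> 'b::chilbert"
  assumes "bounded_op T"
  shows "adj T (c *\<^sub>H y) = c *\<^sub>H adj T y"
  by (rule hinner_ext) (simp add: adj_prop[OF assms, symmetric] hinner_scale_right)

lemma bounded_op_comp:
  fixes F :: "'b::chilbert \<Rightarrow> 'c::chilbert" and T :: "'a::chilbert \<Rightarrow> 'b"
  assumes "bounded_op F" "bounded_op T"
  shows "bounded_op (F \<circ> T)"
proof -
  obtain M1 where M1: "\<And>x. hnorm (F x) \<le> M1 * hnorm x" using bounded_opD(3)[OF assms(1)] by blast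
  obtain M2 where M2: "\<And>x. hnorm (T x) \<le> M2 * hnorm x" using bounded_opD(3)[OF assms(2)] by blast
  have "hnorm (F (T x)) \<le> (max M1 0 * max M2 0) * hnorm x" for x
  proof -
    have "hnorm (F (T x)) \<le> max M1 0 * hnorm (T x)"
      using M1[of "T x"] by (meson dual_order.trans hnorm_nonneg max.cobounded1 mult_right_mono)
    also have "\<dots> \<le> max M1 0 * (max M2 0 * hnorm x)"
      using M2[of x] by (meson dual_order.trans hnorm_nonneg max.cobounded1 max.cobounded2 mult_left_mono mult_right_mono)
    finally show ?thesis by (simp add: ac_simps)
  qed
  then show ?thesis using assms unfolding bounded_op_def by auto
qed

definition Qs :: "('z \<Rightarrow> 'z \<Rightarrow> 'y::chilbert \<Rightarrow> 'y) \<Rightarrow> ('z \<Rightarrow> 'z \<Rightarrow> 'y \<Rightarrow> 'y) \<Rightarrow> nat \<Rightarrow> nat \<Rightarrow> (nat \<Rightarrow> 'z) \<Rightarrow> (nat \<Rightarrow> nat \<Rightarrow> 'y) \<Rightarrow> (nat \<Rightarrow> nat \<Rightarrow> 'y) \<Rightarrow> complex" where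
  "Qs A B n m x a b = (\<Sum>i<n. \<Sum>j<n. \<Sum>k<m. \<Sum>l<m.
          hinner (A (x i) (x j) (a j k)) (a i l) * hinner (B (x i) (x j) (b j k)) (b i l))"

lemma pos_tensor_kernel_Qs:
  "pos_tensor_kernel \<Omega> A B \<longleftrightarrow> (\<forall>n m x a b. (\<forall>i<n. x i \<in> \<Omega>) \<longrightarrow> nonneg_c (Qs A B n m x a b))"
  by (simp add: pos_tensor_kernel_def Qs_def)

definition Dk :: "('z \<Rightarrow> 'u::chilbert \<Rightarrow> 'y::chilbert) \<Rightarrow> real \<Rightarrow> 'z \<Rightarrow> 'z \<Rightarrow> 'y \<Rightarrow> 'y" where
  "Dk S C = (\<lambda>x y v. (complex_of_real (C\<^sup>2)) *\<^sub>H v - S x (adj (S y) v))"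

lemma SA_bound_Dk:
  "SA_bound \<Omega> \<Psi> S C \<longleftrightarrow> 0 \<le> C \<and> (\<forall>K \<in> admissible_kernels \<Omega> \<Psi>. pos_tensor_kernel \<Omega> (Dk S C) K)"
  by (simp add: SA_bound_def Dk_def)

definition Rs :: "('z \<Rightarrow> 'y::chilbert \<Rightarrow> 'h::chilbert) \<Rightarrow> ('z \<Rightarrow> 'x::chilbert \<Rightarrow> 'y) \<Rightarrow> real \<Rightarrow> ('z \<Rightarrow> 'z \<Rightarrow> 'h \<Rightarrow> 'h) \<Rightarrow> nat \<Rightarrow> nat \<Rightarrow> (nat \<Rightarrow> 'z) \<Rightarrow> (nat \<Rightarrow> nat \<Rightarrow> 'h) \<Rightarrow> (nat \<Rightarrow> nat \<Rightarrow> 'h) \<Rightarrow> complex" where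
  "Rs f g Cg K n m x a b = (\<Sum>i<n. \<Sum>j<n. \<Sum>k<m. \<Sum>l<m.
      hinner (Dk g Cg (x i) (x j) (adj (f (x j)) (a j k))) (adj (f (x i)) (a i l)) * hinner (K (x i) (x j) (b j k)) (b i l))"

lemma Dk_split:
  fixes f :: "'z \<Rightarrow> 'y::chilbert \<Rightarrow> 'h::chilbert" and g :: "'z \<Rightarrow> 'x::chilbert \<Rightarrow> 'y"
  assumes bf: "bounded_op (f xi)" "bounded_op (f xj)" and bg: "bounded_op (g xi)" "bounded_op (g xj)"
  shows "hinner (Dk (\<lambda>z. f z \<circ> g z) (Cf * Cg) xi xj v) v' =
     complex_of_real (Cg\<^sup>2) * hinner (Dk f Cf xi xj v) v' + hinner (Dk g Cg xi xj (adj (f xj) v)) (adj (f xi) v')"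
proof -
  have l: "hinner (Dk (\<lambda>z. f z \<circ> g z) (Cf * Cg) xi xj v) v' =
      complex_of_real ((Cf * Cg)\<^sup>2) * hinner v v' - hinner (adj (g xj) (adj (f xj) v)) (adj (g xi) (adj (f xi) v'))"
    by (simp add: Dk_def adj_comp[OF bf(2) bg(2)] hinner_diff_left hinner_scale_left adj_prop[OF bf(1)] adj_prop[OF bg(1)])
  have r: "complex_of_real (Cg\<^sup>2) * hinner (Dk f Cf xi xj v) v' + hinner (Dk g Cg xi xj (adj (f xj) v)) (adj (f xi) v')
     = complex_of_real (Cg\<^sup>2) * (complex_of_real (Cf\<^sup>2) * hinner v v' - hinner (adj (f xj) v) (adj (f xi) v'))
       + (complex_of_real (Cg\<^sup>2) * hinner (adj (f xj) v) (adj (f xi) v') - hinner (adj (g xj) (adj (f xj) v)) (adj (g xi) (adj (f xi) v')))"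
    by (simp add: Dk_def hinner_diff_left hinner_scale_left adj_prop[OF bf(1)] adj_prop[OF bg(1)])
  show ?thesis unfolding l r by (simp add: algebra_simps power_mult_distrib)
qed

lemma nonneg_c_add: "nonneg_c a \<Longrightarrow> nonneg_c b \<Longrightarrow> nonneg_c (a + b)"
  by (simp add: nonneg_c_def)

lemma nonneg_c_scale: "0 \<le> r \<Longrightarrow> nonneg_c a \<Longrightarrow> nonneg_c (complex_of_real r * a)"
  by (simp add: nonneg_c_def)

lemma Qs_split:
  fixes f :: "'z \<Rightarrow> 'y::chilbert \<Rightarrow> 'h::chilbert" and g :: "'z \<Rightarrow> 'x::chilbert \<Rightarrow> 'y"
  assumes bf: "\<forall>z\<in>\<Omega>. bounded_op (f z)" and bg: "\<forall>z\<in>\<Omega>. bounded_op (g z)" and x: "\<forall>i<n. x i \<in> \<Omega>"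
  shows "Qs (Dk (\<lambda>z. f z \<circ> g z) (Cf * Cg)) K n m x a b =
     complex_of_real (Cg\<^sup>2) * Qs (Dk f Cf) K n m x a b + Rs f g Cg K n m x a b"
proof -
  have "Qs (Dk (\<lambda>z. f z \<circ> g z) (Cf * Cg)) K n m x a b =
     (\<Sum>i<n. \<Sum>j<n. \<Sum>k<m. \<Sum>l<m.
        complex_of_real (Cg\<^sup>2) * (hinner (Dk f Cf (x i) (x j) (a j k)) (a i l) * hinner (K (x i) (x j) (b j k)) (b i l))
      + hinner (Dk g Cg (x i) (x j) (adj (f (x j)) (a j k))) (adj (f (x i)) (a i l)) * hinner (K (x i) (x j) (b j k)) (b i l))"
    unfolding Qs_def
  proof (intro sum.cong refl)
    fix i j k l assume ij: "i \<in> {..<n}" "j \<in> {..<n}"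
    then have "x i \<in> \<Omega>" "x j \<in> \<Omega>" using x by auto
    then show "hinner (Dk (\<lambda>z. f z \<circ> g z) (Cf * Cg) (x i) (x j) (a j k)) (a i l) * hinner (K (x i) (x j) (b j k)) (b i l) =
        complex_of_real (Cg\<^sup>2) * (hinner (Dk f Cf (x i) (x j) (a j k)) (a i l) * hinner (K (x i) (x j) (b j k)) (b i l))
      + hinner (Dk g Cg (x i) (x j) (adj (f (x j)) (a j k))) (adj (f (x i)) (a i l)) * hinner (K (x i) (x j) (b j k)) (b i l)"
      using Dk_split[of f "x i" "x j" g Cf Cg "a j k" "a i l"] bf bg by (simp add: algebra_simps)
  qed
  also have "\<dots> = complex_of_real (Cg\<^sup>2) * Qs (Dk f Cf) K n m x a b + Rs f g Cg K n m x a b"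
    unfolding Qs_def Rs_def by (simp only: sum.distrib sum_distrib_left)
  finally show ?thesis .
qed

lemma SA_comp_generic:
  fixes f :: "'z \<Rightarrow> 'y::chilbert \<Rightarrow> 'h::chilbert" and g :: "'z \<Rightarrow> 'x::chilbert \<Rightarrow> 'y"
  assumes bf: "\<forall>z\<in>\<Omega>. bounded_op (f z)" and bg: "\<forall>z\<in>\<Omega>. bounded_op (g z)"
    and Sf: "SA_bound \<Omega> \<Psi> f Cf" and Sg: "SA_bound \<Omega> \<Psi> g Cg"
    and R: "\<And>K n m x a b. K \<in> admissible_kernels \<Omega> \<Psi> \<Longrightarrow> \<forall>i<n. x i \<in> \<Omega> \<Longrightarrow> nonneg_c (Rs f g Cg K n m x a b)"
  shows "SA_bound \<Omega> \<Psi> (\<lambda>z. f z \<circ> g z) (Cf * Cg)"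
  unfolding SA_bound_Dk pos_tensor_kernel_Qs
proof (intro conjI ballI allI impI)
  show "0 \<le> Cf * Cg" using Sf Sg by (simp add: SA_bound_def)
  fix K :: "'z \<Rightarrow> 'z \<Rightarrow> 'h \<Rightarrow> 'h" and n m :: nat and x :: "nat \<Rightarrow> 'z" and a b :: "nat \<Rightarrow> nat \<Rightarrow> 'h"
  assume K: "K \<in> admissible_kernels \<Omega> \<Psi>" and x: "\<forall>i<n. x i \<in> \<Omega>"
  have "nonneg_c (Qs (Dk f Cf) K n m x a b)" using Sf K x unfolding SA_bound_Dk pos_tensor_kernel_Qs by blast
  then have "nonneg_c (complex_of_real (Cg\<^sup>2) * Qs (Dk f Cf) K n m x a b)" by (rule nonneg_c_scale[OF zero_le_power2])
  then show "nonneg_c (Qs (Dk (\<lambda>z. f z \<circ> g z) (Cf * Cg)) K n m x a b)"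
    unfolding Qs_split[OF bf bg x] using R[OF K x] by (rule nonneg_c_add)
qed

lemma Rs_same:
  fixes f :: "'z \<Rightarrow> 'y::chilbert \<Rightarrow> 'y" and g :: "'z \<Rightarrow> 'x::chilbert \<Rightarrow> 'y"
  shows "Rs f g Cg K n m x a b = Qs (Dk g Cg) K n m x (\<lambda>j k. adj (f (x j)) (a j k)) b"
  by (simp add: Rs_def Qs_def)



lemma hscale_c: "c *\<^sub>H (z::complex) = c * z" by (simp add: hscale_complex_def)
lemma hinner_c: "hinner (a::complex) b = a * cnj b" by (simp add: hinner_complex_def)

lemma bop_c: "bounded_op (T :: complex \<Rightarrow> complex) \<Longrightarrow> T c = c * T 1"
  using bounded_opD(2)[of T c 1] by (simp add: hscale_c)

definition Kp :: "('z \<Rightarrow> 'z \<Rightarrow> complex \<Rightarrow> complex) \<Rightarrow> 'y::chilbert \<Rightarrow> 'z \<Rightarrow> 'z \<Rightarrow> 'y \<Rightarrow> 'y" where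
  "Kp K e = (\<lambda>x y v. (K x y 1 * hinner v e) *\<^sub>H e)"

lemma kp_sum:
  assumes e: "hinner e e = 1"
  shows "(\<Sum>i<n. \<Sum>j<n. hinner (Kp K e (x i) (x j) (v j)) (v i)) =
         (\<Sum>i<n. \<Sum>j<n. (hinner (v j) e * K (x i) (x j) 1) * cnj (hinner (v i) e))"
  by (intro sum.cong refl) (simp add: Kp_def hinner_scale_left hinner_commute[of e])

lemma k_sum:
  assumes "\<forall>i<n. x i \<in> \<Omega>" "\<forall>x\<in>\<Omega>. \<forall>y\<in>\<Omega>. bounded_op (K x y)"
  shows "(\<Sum>i<n. \<Sum>j<n. hinner (K (x i) (x j) (s j)) (s i)) =
         (\<Sum>i<n. \<Sum>j<n. (s j * K (x i) (x j) 1) * cnj (s i))"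
proof (intro sum.cong refl)
  fix i j assume "i \<in> {..<n}" "j \<in> {..<n}"
  then have "bounded_op (K (x i) (x j))" using assms by auto
  then show "hinner (K (x i) (x j) (s j)) (s i) = (s j * K (x i) (x j) 1) * cnj (s i)"
    using bop_c by (simp add: hinner_c)
qed

lemma Kp_admissible:
  fixes K :: "'z \<Rightarrow> 'z \<Rightarrow> complex \<Rightarrow> complex" and e :: "'y::chilbert"
  assumes K: "K \<in> admissible_kernels \<Omega> \<Psi>" and e: "hinner e e = 1"
  shows "Kp K e \<in> admissible_kernels \<Omega> \<Psi>"
proof -
  have Kb: "\<forall>x\<in>\<Omega>. \<forall>y\<in>\<Omega>. bounded_op (K x y)" and Kpos: "pos_kernel \<Omega> K"
    and Kmc: "\<forall>\<psi>\<in>\<Psi>. mult_contraction \<Omega> \<psi> K"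
    using K by (auto simp: admissible_kernels_def)
  have he: "hnorm e = 1" using e by (simp add: hnorm_def)
  have sums: "(\<Sum>i<n. \<Sum>j<n. hinner (Kp K e (x i) (x j) (v j)) (v i)) =
      (\<Sum>i<n. \<Sum>j<n. hinner (K (x i) (x j) (hinner (v j) e)) (hinner (v i) e))"
    if "\<forall>i<n. x i \<in> \<Omega>" for n x v
    unfolding kp_sum[OF e] k_sum[OF that Kb] ..
  have bo: "bounded_op (Kp K e x y)" for x y
    unfolding bounded_op_def
  proof (intro conjI allI)
    show "Kp K e x y (v + w) = Kp K e x y v + Kp K e x y w" for v w
      by (simp add: Kp_def hinner_add_left distrib_left hscale_add_left)
    show "Kp K e x y (c *\<^sub>H v) = c *\<^sub>H Kp K e x y v" for c v
      by (simp add: Kp_def hinner_scale_left hscale_hscale ac_simps)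
    show "\<exists>M. \<forall>v. hnorm (Kp K e x y v) \<le> M * hnorm v"
    proof (intro exI allI)
      fix v
      have "hnorm (Kp K e x y v) = cmod (K x y 1) * cmod (hinner v e)"
        by (simp add: Kp_def hnorm_scale he norm_mult)
      also have "\<dots> \<le> cmod (K x y 1) * hnorm v"
        using hinner_le[of v e] he by (simp add: mult_left_mono)
      finally show "hnorm (Kp K e x y v) \<le> cmod (K x y 1) * hnorm v" .
    qed
  qed
  have pk: "pos_kernel \<Omega> (Kp K e)"
    unfolding pos_kernel_def
  proof (intro allI impI)
    fix n and x :: "nat \<Rightarrow> 'z" and v :: "nat \<Rightarrow> 'y" assume x: "\<forall>i<n. x i \<in> \<Omega>"
    show "nonneg_c (\<Sum>i<n. \<Sum>j<n. hinner (Kp K e (x i) (x j) (v j)) (v i))"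
      using Kpos[unfolded pos_kernel_def, rule_format, of n x "\<lambda>i. hinner (v i) e", OF x[rule_format]]
      by (simp only: sums[OF x])
  qed
  have mc: "mult_contraction \<Omega> \<psi> (Kp K e)" if \<psi>: "\<psi> \<in> \<Psi>" for \<psi>
    unfolding mult_contraction_def
  proof (intro allI impI)
    fix h :: "'z \<Rightarrow> 'y" and C assume hb: "rkhs_ball \<Omega> (Kp K e) h C"
    define h0 where "h0 z = hinner (h z) e" for z
    have C0: "0 \<le> C" using hb by (simp add: rkhs_ball_def)
    have "rkhs_ball \<Omega> K h0 C"
      unfolding rkhs_ball_def
    proof (intro conjI allI impI C0)
      fix n and x :: "nat \<Rightarrow> 'z" and s :: "nat \<Rightarrow> complex" assume x: "\<forall>i<n. x i \<in> \<Omega>"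
      have "(cmod (\<Sum>i<n. hinner (h (x i)) (s i *\<^sub>H e)))\<^sup>2 \<le>
          C\<^sup>2 * Re (\<Sum>i<n. \<Sum>j<n. hinner (Kp K e (x i) (x j) (s j *\<^sub>H e)) (s i *\<^sub>H e))"
        using hb[unfolded rkhs_ball_def, THEN conjunct2, rule_format, of n x "\<lambda>i. s i *\<^sub>H e", OF x[rule_format]] by simp
      moreover have "(\<Sum>i<n. hinner (h (x i)) (s i *\<^sub>H e)) = (\<Sum>i<n. hinner (h0 (x i)) (s i))"
        by (simp add: hinner_scale_right h0_def hinner_c mult.commute)
      moreover have "(\<Sum>i<n. \<Sum>j<n. hinner (Kp K e (x i) (x j) (s j *\<^sub>H e)) (s i *\<^sub>H e)) =
          (\<Sum>i<n. \<Sum>j<n. hinner (K (x i) (x j) (s j)) (s i))"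
        unfolding sums[OF x] by (simp add: hinner_scale_left e)
      ultimately show "(cmod (\<Sum>i<n. hinner (h0 (x i)) (s i)))\<^sup>2 \<le>
          C\<^sup>2 * Re (\<Sum>i<n. \<Sum>j<n. hinner (K (x i) (x j) (s j)) (s i))" by simp
    qed
    then have hb2: "rkhs_ball \<Omega> K (\<lambda>z. \<psi> z *\<^sub>H h0 z) C" using Kmc \<psi> \<open>rkhs_ball \<Omega> K h0 C\<close> unfolding mult_contraction_def by simp
    have hz: "h z = h0 z *\<^sub>H e" if z: "z \<in> \<Omega>" for z
    proof -
      define d where "d = h z - h0 z *\<^sub>H e"
      have de: "hinner d e = 0" by (simp add: d_def hinner_diff_left hinner_scale_left e h0_def)
      have "(cmod (hinner (h z) d))\<^sup>2 \<le> C\<^sup>2 * Re (hinner (Kp K e z z d) d)"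
        using hb[unfolded rkhs_ball_def, THEN conjunct2, rule_format, of 1 "\<lambda>_. z" "\<lambda>_. d"] z by simp
      then have "(cmod (hinner (h z) d))\<^sup>2 \<le> 0" by (simp add: Kp_def de hinner_scale_left)
      then have hd: "hinner (h z) d = 0" by simp
      have "hinner d d = hinner (h z) d - h0 z * hinner e d"
        by (simp add: d_def hinner_diff_left hinner_scale_left)
      also have "\<dots> = 0" using hd de hinner_commute[of e d] by simp
      finally have "d = 0" using hinner_self_eq_0 by blast
      then show ?thesis by (simp add: d_def)
    qed
    show "rkhs_ball \<Omega> (Kp K e) (\<lambda>z. \<psi> z *\<^sub>H h z) C"
      unfolding rkhs_ball_def
    proof (intro conjI allI impI C0)
      fix n and x :: "nat \<Rightarrow> 'z" and v :: "nat \<Rightarrow> 'y" assume x: "\<forall>i<n. x i \<in> \<Omega>"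
      have "(cmod (\<Sum>i<n. hinner (\<psi> (x i) *\<^sub>H h0 (x i)) (hinner (v i) e)))\<^sup>2 \<le>
          C\<^sup>2 * Re (\<Sum>i<n. \<Sum>j<n. hinner (K (x i) (x j) (hinner (v j) e)) (hinner (v i) e))"
        using hb2[unfolded rkhs_ball_def, THEN conjunct2, rule_format, of n x "\<lambda>i. hinner (v i) e", OF x[rule_format]] by simp
      moreover have "(\<Sum>i<n. hinner (\<psi> (x i) *\<^sub>H h (x i)) (v i)) = (\<Sum>i<n. hinner (\<psi> (x i) *\<^sub>H h0 (x i)) (hinner (v i) e))"
      proof (intro sum.cong refl)
        fix i assume "i \<in> {..<n}"
        then have "x i \<in> \<Omega>" using x by auto
        then show "hinner (\<psi> (x i) *\<^sub>H h (x i)) (v i) = hinner (\<psi> (x i) *\<^sub>H h0 (x i)) (hinner (v i) e)"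
          using hz by (simp add: hinner_scale_left hinner_c hscale_c hinner_commute[of e])
      qed
      ultimately show "(cmod (\<Sum>i<n. hinner (\<psi> (x i) *\<^sub>H h (x i)) (v i)))\<^sup>2 \<le>
          C\<^sup>2 * Re (\<Sum>i<n. \<Sum>j<n. hinner (Kp K e (x i) (x j) (v j)) (v i))"
        unfolding sums[OF x] by simp
    qed
  qed
  show ?thesis using bo pk mc by (simp add: admissible_kernels_def)
qed



lemma Dk_lin:
  assumes "bounded_op (g xi)" "bounded_op (g xj)"
  shows "Dk g C xi xj (c *\<^sub>H v) = c *\<^sub>H Dk g C xi xj v"
  by (simp add: Dk_def adj_scale[OF assms(2)] bounded_opD(2)[OF assms(1)] hscale_diff_right hscale_hscale mult.commute)

lemma Rs_complex:
  fixes f :: "'z \<Rightarrow> 'y::chilbert \<Rightarrow> complex" and g :: "'z \<Rightarrow> 'x::chilbert \<Rightarrow> 'y"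
  assumes bf: "\<forall>z\<in>\<Omega>. bounded_op (f z)" and bg: "\<forall>z\<in>\<Omega>. bounded_op (g z)"
    and Sg: "SA_bound \<Omega> \<Psi> g Cg" and K: "K \<in> admissible_kernels \<Omega> \<Psi>" and x: "\<forall>i<n. x i \<in> \<Omega>"
  shows "nonneg_c (Rs f g Cg K n m x a b)"
proof -
  have Kb: "\<forall>x\<in>\<Omega>. \<forall>y\<in>\<Omega>. bounded_op (K x y)" using K by (simp add: admissible_kernels_def)
  define w where "w j = adj (f (x j)) 1" for j
  define G where "G i j = hinner (Dk g Cg (x i) (x j) (w j)) (w i)" for i j
  define kv where "kv i j = K (x i) (x j) 1" for i j
  define c where "c j = (\<Sum>k<m. a j k * b j k)" for j
  have adjc: "adj (f (x j)) s = s *\<^sub>H w j" if "j < n" for j s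
  proof -
    have "bounded_op (f (x j))" using bf x that by auto
    from adj_scale[OF this, of s 1] show ?thesis by (simp add: w_def hscale_c)
  qed
  have inner1: "hinner (Dk g Cg (x i) (x j) (s *\<^sub>H w j)) (t *\<^sub>H w i) = s * cnj t * G i j"
    if "i < n" "j < n" for i j s t
  proof -
    have "bounded_op (g (x i))" "bounded_op (g (x j))" using bg x that by auto
    then show ?thesis by (simp add: Dk_lin hinner_scale_left hinner_scale_right G_def)
  qed
  have Rs_eq: "Rs f g Cg K n m x a b = (\<Sum>i<n. \<Sum>j<n. (G i j * kv i j) * (c j * cnj (c i)))"
    unfolding Rs_def
  proof (intro sum.cong refl)
    fix i j assume ij: "i \<in> {..<n}" "j \<in> {..<n}"
    have kb: "bounded_op (K (x i) (x j))" using Kb x ij by auto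
    have "(\<Sum>k<m. \<Sum>l<m. hinner (Dk g Cg (x i) (x j) (adj (f (x j)) (a j k))) (adj (f (x i)) (a i l)) *
            hinner (K (x i) (x j) (b j k)) (b i l)) =
          (\<Sum>k<m. \<Sum>l<m. (G i j * kv i j) * ((a j k * b j k) * cnj (a i l * b i l)))"
    proof (intro sum.cong refl)
      fix kk ll
      show "hinner (Dk g Cg (x i) (x j) (adj (f (x j)) (a j kk))) (adj (f (x i)) (a i ll)) *
            hinner (K (x i) (x j) (b j kk)) (b i ll) = (G i j * kv i j) * ((a j kk * b j kk) * cnj (a i ll * b i ll))"
        using ij bop_c[OF kb, of "b j kk"] by (simp add: adjc inner1 hinner_c kv_def)
    qed
    also have "\<dots> = (G i j * kv i j) * (c j * cnj (c i))"
    proof -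
      have "c j * cnj (c i) = (\<Sum>k<m. \<Sum>l<m. (a j k * b j k) * cnj (a i l * b i l))"
        unfolding c_def cnj_sum sum_product ..
      then show ?thesis by (simp only: sum_distrib_left)
    qed
    finally show "(\<Sum>k<m. \<Sum>l<m. hinner (Dk g Cg (x i) (x j) (adj (f (x j)) (a j k))) (adj (f (x i)) (a i l)) *
            hinner (K (x i) (x j) (b j k)) (b i l)) = (G i j * kv i j) * (c j * cnj (c i))" .
  qed
  show ?thesis
  proof (cases "\<exists>v::'y. v \<noteq> 0")
    case False
    then have "w i = 0" for i by blast
    then have "G i j = 0" for i j by (simp add: G_def)
    then show ?thesis unfolding Rs_eq by (simp add: nonneg_c_def)
  next
    case True
    then obtain v :: 'y where v: "v \<noteq> 0" by blast
    define e where "e = (1 / of_real (hnorm v)) *\<^sub>H v"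
    have hv: "hnorm v > 0" using v hnorm_nonneg hnorm_eq_0 by (metis less_eq_real_def)
    have e1: "hinner e e = 1"
    proof -
      have "hinner e e = (1 / of_real (hnorm v)) * (1 / of_real (hnorm v)) * hinner v v"
        by (simp add: e_def hinner_scale_left hinner_scale_right)
      also have "hinner v v = of_real ((hnorm v)\<^sup>2)" by (simp add: hnorm_sq flip: hinner_self_of_real)
      finally show ?thesis using hv v by (simp add: power2_eq_square)
    qed
    have "Kp K e \<in> admissible_kernels \<Omega> \<Psi>" by (rule Kp_admissible[OF K e1])
    then have "nonneg_c (Qs (Dk g Cg) (Kp K e) n 1 x (\<lambda>j kk. c j *\<^sub>H w j) (\<lambda>j kk. e))"
      using Sg x unfolding SA_bound_Dk pos_tensor_kernel_Qs by blast
    moreover have "Qs (Dk g Cg) (Kp K e) n 1 x (\<lambda>j kk. c j *\<^sub>H w j) (\<lambda>j kk. e) =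
        (\<Sum>i<n. \<Sum>j<n. (G i j * kv i j) * (c j * cnj (c i)))"
      unfolding Qs_def
    proof (intro sum.cong refl)
      fix i j assume ij: "i \<in> {..<n}" "j \<in> {..<n}"
      have l1: "{..<1::nat} = {0}" by auto
      show "(\<Sum>kk<(1::nat). \<Sum>l<(1::nat). hinner (Dk g Cg (x i) (x j) (c j *\<^sub>H w j)) (c i *\<^sub>H w i) *
             hinner (Kp K e (x i) (x j) e) e) = (G i j * kv i j) * (c j * cnj (c i))"
        using ij unfolding l1 by (simp add: inner1 Kp_def hinner_scale_left e1 kv_def)
    qed
    ultimately show ?thesis unfolding Rs_eq by simp
  qed
qed



lemma SA_Psi_comp:
  fixes f :: "'z \<Rightarrow> 'y::chilbert \<Rightarrow> 'h::chilbert" and g :: "'z \<Rightarrow> 'x::chilbert \<Rightarrow> 'y"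
  assumes g: "g \<in> SA_Psi \<Omega> \<Psi>" and f: "f \<in> SA_Psi \<Omega> \<Psi>"
    and R: "\<And>Cf Cg. SA_bound \<Omega> \<Psi> f Cf \<Longrightarrow> SA_bound \<Omega> \<Psi> g Cg \<Longrightarrow> SA_bound \<Omega> \<Psi> (\<lambda>z. f z \<circ> g z) (Cf * Cg)"
  shows "(\<lambda>z. f z \<circ> g z) \<in> SA_Psi \<Omega> \<Psi>"
proof -
  have bf: "\<forall>z\<in>\<Omega>. bounded_op (f z)" and bg: "\<forall>z\<in>\<Omega>. bounded_op (g z)"
    using f g by (auto simp: SA_Psi_def Hinf_Psi_def)
  obtain Cf0 where Cf0: "SA_bound \<Omega> \<Psi> f Cf0" using f by (auto simp: SA_Psi_def Hinf_Psi_def)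
  obtain Cg0 where Cg0: "SA_bound \<Omega> \<Psi> g Cg0" using g by (auto simp: SA_Psi_def Hinf_Psi_def)
  have nf: "Inf {C. SA_bound \<Omega> \<Psi> f C} \<le> 1" using f by (simp add: SA_Psi_def Psi_norm_def)
  have ng: "Inf {C. SA_bound \<Omega> \<Psi> g C} \<le> 1" using g by (simp add: SA_Psi_def Psi_norm_def)
  have bdd: "bdd_below {C. SA_bound \<Omega> \<Psi> S C}" for S :: "'z \<Rightarrow> 'u::chilbert \<Rightarrow> 'v::chilbert"
    by (rule bdd_belowI[of _ 0]) (simp add: SA_bound_def)
  have small: "\<exists>C. SA_bound \<Omega> \<Psi> S C \<and> C < 1 + d"
    if "d > 0" "SA_bound \<Omega> \<Psi> S C0" "Inf {C. SA_bound \<Omega> \<Psi> S C} \<le> 1"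
    for d C0 and S :: "'z \<Rightarrow> 'u::chilbert \<Rightarrow> 'v::chilbert"
  proof -
    have "Inf {C. SA_bound \<Omega> \<Psi> S C} < 1 + d" using that by simp
    then show ?thesis using cInf_less_iff[OF _ bdd[of S]] that(2) by blast
  qed
  have main: "Inf {C. SA_bound \<Omega> \<Psi> (\<lambda>z. f z \<circ> g z) C} \<le> 1 + e" if e: "e > 0" for e
  proof -
    define d where "d = min 1 (e / 3)"
    have d: "d > 0" "d \<le> 1" "d \<le> e / 3" using e by (auto simp: d_def)
    obtain Cf where Cf: "SA_bound \<Omega> \<Psi> f Cf" "Cf < 1 + d" using small[OF d(1) Cf0 nf] by blast
    obtain Cg where Cg: "SA_bound \<Omega> \<Psi> g Cg" "Cg < 1 + d" using small[OF d(1) Cg0 ng] by blast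
    have "0 \<le> Cf" "0 \<le> Cg" using Cf Cg by (auto simp: SA_bound_def)
    then have "Cf * Cg \<le> (1 + d) * (1 + d)" using Cf(2) Cg(2) by (intro mult_mono) auto
    also have "\<dots> \<le> 1 + e" using d by (simp add: algebra_simps) (smt (verit) mult_left_le_one_le)
    finally have le: "Cf * Cg \<le> 1 + e" .
    have "Inf {C. SA_bound \<Omega> \<Psi> (\<lambda>z. f z \<circ> g z) C} \<le> Cf * Cg"
      by (rule cInf_lower) (use R[OF Cf(1) Cg(1)] bdd in auto)
    then show ?thesis using le by linarith
  qed
  have "Inf {C. SA_bound \<Omega> \<Psi> (\<lambda>z. f z \<circ> g z) C} \<le> 1"
    by (rule field_le_epsilon) (rule main)
  moreover have "\<forall>z\<in>\<Omega>. bounded_op (f z \<circ> g z)" using bf bg by (simp add: bounded_op_comp)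
  moreover have "\<exists>C. SA_bound \<Omega> \<Psi> (\<lambda>z. f z \<circ> g z) C" using R[OF Cf0 Cg0] by blast
  ultimately show ?thesis by (simp add: SA_Psi_def Hinf_Psi_def Psi_norm_def)
qed

theorem lemma2p1:
  fixes \<Omega> :: "(complex ^ 'n) set" and \<Psi> :: "(complex ^ 'n \<Rightarrow> complex) set"
  assumes "bounded \<Omega>" and "open \<Omega>" and "connected \<Omega>" and "\<Omega> \<noteq> {}"
    and "test_functions \<Omega> \<Psi>"
  shows "(\<forall>(g :: complex ^ 'n \<Rightarrow> 'x::chilbert \<Rightarrow> 'y::chilbert) (f :: complex ^ 'n \<Rightarrow> 'y \<Rightarrow> complex).
            g \<in> SA_Psi \<Omega> \<Psi> \<and> f \<in> SA_Psi \<Omega> \<Psi> \<longrightarrow> (\<lambda>z. f z \<circ> g z) \<in> SA_Psi \<Omega> \<Psi>)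
       \<and> (\<forall>(g :: complex ^ 'n \<Rightarrow> 'x \<Rightarrow> 'y) (f :: complex ^ 'n \<Rightarrow> 'y \<Rightarrow> 'y).
            g \<in> SA_Psi \<Omega> \<Psi> \<and> f \<in> SA_Psi \<Omega> \<Psi> \<longrightarrow> (\<lambda>z. f z \<circ> g z) \<in> SA_Psi \<Omega> \<Psi>)"
proof (intro conjI allI impI; elim conjE)
  fix g :: "complex ^ 'n \<Rightarrow> 'x \<Rightarrow> 'y" and f :: "complex ^ 'n \<Rightarrow> 'y \<Rightarrow> complex"
  assume g: "g \<in> SA_Psi \<Omega> \<Psi>" and f: "f \<in> SA_Psi \<Omega> \<Psi>"
  have bf: "\<forall>z\<in>\<Omega>. bounded_op (f z)" and bg: "\<forall>z\<in>\<Omega>. bounded_op (g z)"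
    using f g by (auto simp: SA_Psi_def Hinf_Psi_def)
  show "(\<lambda>z. f z \<circ> g z) \<in> SA_Psi \<Omega> \<Psi>"
  proof (rule SA_Psi_comp[OF g f])
    fix Cf Cg assume Sf: "SA_bound \<Omega> \<Psi> f Cf" and Sg: "SA_bound \<Omega> \<Psi> g Cg"
    show "SA_bound \<Omega> \<Psi> (\<lambda>z. f z \<circ> g z) (Cf * Cg)"
      by (rule SA_comp_generic[OF bf bg Sf Sg]) (rule Rs_complex[OF bf bg Sg])
  qed
next
  fix g :: "complex ^ 'n \<Rightarrow> 'x \<Rightarrow> 'y" and f :: "complex ^ 'n \<Rightarrow> 'y \<Rightarrow> 'y"
  assume g: "g \<in> SA_Psi \<Omega> \<Psi>" and f: "f \<in> SA_Psi \<Omega> \<Psi>"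
  have bf: "\<forall>z\<in>\<Omega>. bounded_op (f z)" and bg: "\<forall>z\<in>\<Omega>. bounded_op (g z)"
    using f g by (auto simp: SA_Psi_def Hinf_Psi_def)
  show "(\<lambda>z. f z \<circ> g z) \<in> SA_Psi \<Omega> \<Psi>"
  proof (rule SA_Psi_comp[OF g f])
    fix Cf Cg assume Sf: "SA_bound \<Omega> \<Psi> f Cf" and Sg: "SA_bound \<Omega> \<Psi> g Cg"
    show "SA_bound \<Omega> \<Psi> (\<lambda>z. f z \<circ> g z) (Cf * Cg)"
    proof (rule SA_comp_generic[OF bf bg Sf Sg])
      fix K :: "complex ^ 'n \<Rightarrow> complex ^ 'n \<Rightarrow> 'y \<Rightarrow> 'y" and n m x a b assume K: "K \<in> admissible_kernels \<Omega> \<Psi>" and x: "\<forall>i<(n::nat). x i \<in> \<Omega>"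
      show "nonneg_c (Rs f g Cg K n m x a b)"
        unfolding Rs_same using Sg K x unfolding SA_bound_Dk pos_tensor_kernel_Qs by blast
    qed
  qed
qed

end
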